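(* Let $n\ge 1$, $d=2$, and for every $i\in[n]$ let $f_i(x)=\|x\|_1$, so that $f(x)=\|x\|_1$ and $\min_x f(x)=0$. Let $\gamma\ge 0$, $x^0=(\gamma/2,\,-1)^\top$ and $v_i^0=(1,1)^\top$ for all $i$. Consider the EF21 method $$x^{t+1}=x^t-\gamma v^t,\quad v^t=\frac1n\sum_{i=1}^n v_i^t,\qquad v_i^{t+1}=v_i^t+\mathcal C\big(f_i'(x^{t+1})-v_i^t\big),\quad f_i'(x^{t+1})\in\partial f_i(x^{t+1}),$$ with $\mathcal C$ the Top-$1$ compressor. Then for every $t\ge 0$, $$f(x^t)-\min_{x\in\mathbb R^2} f(x)=1+\frac{\gamma}{2}+t\gamma .$$
   Context: The Top-$1$ compressor $\mathcal C:\mathbb R^2\to\mathbb R^2$ keeps the coordinate of largest absolute value and sets the other coordinate to zero; when both coordinates have equal absolute value it keeps the first coordinate. $\partial f_i(x)$ denotes the convex subdifferential. *)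

theory Defs
  imports "HOL-Analysis.Analysis"
begin

definition l1norm :: "real \<times> real \<Rightarrow> real" where
  "l1norm x = \<bar>fst x\<bar> + \<bar>snd x\<bar>"

definition subdiff :: "(real \<times> real \<Rightarrow> real) \<Rightarrow> real \<times> real \<Rightarrow> (real \<times> real) set" where
  "subdiff f x = {g. \<forall>y. f y \<ge> f x + inner g (y - x)}"

definition top1 :: "real \<times> real \<Rightarrow> real \<times> real" where
  "top1 x = (if \<bar>fst x\<bar> \<ge> \<bar>snd x\<bar> then (fst x, 0) else (0, snd x))"

end

theory Submission
  imports Defs
begin

lemma subdiff_fst:
  assumes "g \<in> subdiff l1norm x" "fst x \<noteq> 0"
  shows "fst g = sgn (fst x)"
proof -
  obtain a b where x: "x = (a,b)" by (cases x)
  obtain c d where gg: "g = (c,d)" by (cases g)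
  have h: "\<And>y. l1norm y \<ge> l1norm x + inner g (y - x)" using assms(1) unfolding subdiff_def by blast
  have 1: "\<bar>2*a\<bar> + \<bar>b\<bar> \<ge> \<bar>a\<bar> + \<bar>b\<bar> + c * a" using h[of "(2*a,b)"] by (simp add: x gg l1norm_def)
  have 2: "\<bar>b\<bar> \<ge> \<bar>a\<bar> + \<bar>b\<bar> - c * a" using h[of "(0,b)"] by (simp add: x gg l1norm_def)
  show ?thesis
  proof (cases "a > 0")
    case True
    then have "c*a \<le> 1*a" "c*a \<ge> 1*a" using 1 2 by auto
    then have "c = 1" using True by (meson antisym mult_le_cancel_right_pos)
    then show ?thesis using True by (simp add: x gg)
  next
    case False
    then have a: "a < 0" using assms(2) x by auto
    then have "c*a \<le> (-1)*a" "c*a \<ge> (-1)*a" using 1 2 by auto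
    then have "c*a = (-1)*a" by linarith
    then have "c = -1" using a by (metis mult_cancel_right less_irrefl)
    then show ?thesis using a by (simp add: x gg)
  qed
qed

lemma subdiff_snd:
  assumes "g \<in> subdiff l1norm x" "snd x \<noteq> 0"
  shows "snd g = sgn (snd x)"
proof -
  obtain a b where x: "x = (a,b)" by (cases x)
  obtain c d where gg: "g = (c,d)" by (cases g)
  have h: "\<And>y. l1norm y \<ge> l1norm x + inner g (y - x)" using assms(1) unfolding subdiff_def by blast
  have 1: "\<bar>a\<bar> + \<bar>2*b\<bar> \<ge> \<bar>a\<bar> + \<bar>b\<bar> + d * b" using h[of "(a,2*b)"] by (simp add: x gg l1norm_def)
  have 2: "\<bar>a\<bar> \<ge> \<bar>a\<bar> + \<bar>b\<bar> - d * b" using h[of "(a,0)"] by (simp add: x gg l1norm_def)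
  show ?thesis
  proof (cases "b > 0")
    case True
    then have "d*b \<le> 1*b" "d*b \<ge> 1*b" using 1 2 by auto
    then have "d = 1" using True by (meson antisym mult_le_cancel_right_pos)
    then show ?thesis using True by (simp add: x gg)
  next
    case False
    then have a: "b < 0" using assms(2) x by auto
    then have "d*b \<le> (-1)*b" "d*b \<ge> (-1)*b" using 1 2 by auto
    then have "d*b = (-1)*b" by linarith
    then have "d = -1" using a by (metis mult_cancel_right less_irrefl)
    then show ?thesis using a by (simp add: x gg)
  qed
qed

theorem mainTheorem2:
  fixes n :: nat and \<gamma> :: real
    and f :: "nat \<Rightarrow> real \<times> real \<Rightarrow> real"
    and x :: "nat \<Rightarrow> real \<times> real"
    and v :: "nat \<Rightarrow> nat \<Rightarrow> real \<times> real"
    and g :: "nat \<Rightarrow> nat \<Rightarrow> real \<times> real"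
  assumes n: "n \<ge> 1"
    and fi: "\<forall>i\<in>{1..n}. f i = l1norm"
    and gam: "\<gamma> \<ge> 0"
    and x0: "x 0 = (\<gamma> / 2, -1)"
    and v0: "\<forall>i\<in>{1..n}. v i 0 = (1, 1)"
    and xstep: "\<forall>t. x (Suc t) = x t - \<gamma> *\<^sub>R ((1 / real n) *\<^sub>R (\<Sum>i=1..n. v i t))"
    and gsub: "\<forall>t. \<forall>i\<in>{1..n}. g i (Suc t) \<in> subdiff (f i) (x (Suc t))"
    and vstep: "\<forall>t. \<forall>i\<in>{1..n}. v i (Suc t) = v i t + top1 (g i (Suc t) - v i t)"
  shows "\<forall>t. (\<lambda>y. (1 / real n) * (\<Sum>i=1..n. f i y)) (x t)
              - (INF y. (1 / real n) * (\<Sum>i=1..n. f i y))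
            = 1 + \<gamma> / 2 + real t * \<gamma>"
proof -
  have nz: "real n \<noteq> 0" using n by simp
  have F: "\<And>y. (1 / real n) * (\<Sum>i=1..n. f i y) = l1norm y"
  proof -
    fix y
    have "(\<Sum>i=1..n. f i y) = (\<Sum>i=1..n. l1norm y)" using fi by (intro sum.cong) auto
    then show "(1 / real n) * (\<Sum>i=1..n. f i y) = l1norm y" using nz by simp
  qed
  have nonneg: "\<And>y. l1norm y \<ge> 0" by (simp add: l1norm_def)
  have INF0: "(INF y. l1norm y) = 0"
  proof (rule antisym)
    show "(INF y. l1norm y) \<le> 0"
    proof -
      have "bdd_below (range l1norm)" using nonneg by (auto simp: bdd_below_def)
      then have "(INF y. l1norm y) \<le> l1norm (0,0)" by (rule cINF_lower) simp
      then show ?thesis by (simp add: l1norm_def)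
    qed
    show "0 \<le> (INF y. l1norm y)" by (rule cINF_greatest) (auto simp: nonneg)
  qed
  define X where "X t = (if even t then \<gamma>/2 else -\<gamma>/2, -1 - real t * \<gamma>)" for t :: nat
  have lX: "\<And>t. l1norm (X t) = 1 + \<gamma> / 2 + real t * \<gamma>"
  proof -
    fix t
    have "real t * \<gamma> \<ge> 0" using gam by simp
    then have "\<bar>-1 - real t * \<gamma>\<bar> = 1 + real t * \<gamma>" by linarith
    then show "l1norm (X t) = 1 + \<gamma> / 2 + real t * \<gamma>" using gam by (simp add: X_def l1norm_def)
  qed
  have xX: "\<forall>t. x t = X t"
  proof (cases "\<gamma> = 0")
    case True
    have "x t = X t" for t
    proof (induction t)
      case 0 then show ?case using x0 True by (simp add: X_def)
    next
      case (Suc t) then show ?case using xstep True by (simp add: X_def)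
    qed
    then show ?thesis by blast
  next
    case False
    then have gp: "\<gamma> > 0" using gam by simp
    define V where "V t = ((if even t then 1 else -1) :: real, 1 :: real)" for t :: nat
    have "x t = X t \<and> (\<forall>i\<in>{1..n}. v i t = V t)" for t
    proof (induction t)
      case 0 then show ?case using x0 v0 by (simp add: X_def V_def)
    next
      case (Suc t)
      have sv: "(\<Sum>i=1..n. v i t) = (\<Sum>i=1..n. V t)" using Suc by (intro sum.cong) auto
      have avg: "(1 / real n) *\<^sub>R (\<Sum>i=1..n. v i t) = V t" unfolding sv sum_constant_scaleR using nz by simp
      have xs: "x (Suc t) = X (Suc t)"
      proof -
        have "x (Suc t) = x t - \<gamma> *\<^sub>R ((1 / real n) *\<^sub>R (\<Sum>i=1..n. v i t))" using xstep by blast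
        also have "\<dots> = X t - \<gamma> *\<^sub>R V t" using avg Suc by simp
        finally have "x (Suc t) = X t - \<gamma> *\<^sub>R V t" .
        then show ?thesis by (simp add: X_def V_def algebra_simps)
      qed
      have "\<forall>i\<in>{1..n}. v i (Suc t) = V (Suc t)"
      proof
        fix i assume i: "i \<in> {1..n}"
        have gi: "g i (Suc t) \<in> subdiff l1norm (X (Suc t))" using gsub fi i xs by (metis)
        have f1: "fst (X (Suc t)) \<noteq> 0" "snd (X (Suc t)) \<noteq> 0" using gp
          by (auto simp: X_def) (smt (verit) mult_nonneg_nonneg of_nat_0_le_iff)
        have g1: "fst (g i (Suc t)) = (if even t then -1 else 1)"
          using subdiff_fst[OF gi f1(1)] gp by (simp add: X_def)
        have g2: "snd (g i (Suc t)) = -1"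
          using subdiff_snd[OF gi f1(2)] gp
          by (simp add: X_def) (smt (verit) mult_nonneg_nonneg of_nat_0_le_iff sgn_neg)
        have gg: "g i (Suc t) = (if even t then -1 else 1, -1)"
          using g1 g2 by (metis prod.collapse)
        show "v i (Suc t) = V (Suc t)"
          using vstep i Suc gg by (auto simp: V_def top1_def)
      qed
      then show ?case using xs by blast
    qed
    then show ?thesis by blast
  qed
  show ?thesis unfolding F using xX lX INF0 by simp
qed

end
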